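(* Assume $l>1$. For every partition $\mu$ and every $i\in\mathbb{Z}/l\mathbb{Z}$ one has $\mathfrak{d}(\sigma_i*\mu)=\sigma_i*\mathfrak{d}(\mu)$. That is, the map $\mathfrak{d}:\mathcal{P}\to\mathbb{Z}^l$ is $\tilde S_l$-equivariant. The same holds for its restriction $\mathfrak{d}:\heartsuit(l)\to\mathbb{Z}_{\heartsuit}$ to $l$-cores.
   Context: Partitions are identified with Young diagrams $\mathbb{Y}(\mu)=\{(i,j):1\le j\le\mu_i\}$ (English convention). The content of a cell $(i,j)$ is $c(i,j)=j-i$. For a partition $\lambda$ let $N_i(\lambda)$ ($i\in\{0,\dots,l-1\}$) be the number of cells of $\lambda$ of content $\equiv i \pmod l$, and put $\mathfrak{d}(\lambda)=\mathbf{d}_\lambda=(N_0(\lambda),\dots,N_{l-1}(\lambda))$. Let $\mathcal{P}$ be the set of all partitions and $\heartsuit(l)$ the set of $l$-cores (partitions from which no rim-hook of $l$ cells can be removed). Let $\mathbb{Z}_\heartsuit=\{\mathbf{d}_\nu:\nu\in\heartsuit(l)\}$. The affine symmetric group $\tilde S_l$ has Coxeter generators $\sigma_0,\dots,\sigma_{l-1}$ (indices mod $l$) with relations $\sigma_i^2=1$ and $\sigma_i\sigma_{i+1}\sigma_i=\sigma_{i+1}\sigma_i\sigma_{i+1}$. It acts on $\mathcal{P}$ by $\sigma_i*\mu=\mathbf{T}_i(\mu)$. Here $\mathbb{Y}(\mathbf{T}_i(\mu))$ is obtained from $\mathbb{Y}(\mu)$ by adding all addable cells of content $\equiv i\pmod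 l$ and removing all removable cells of content $\equiv i \pmod l$ (a cell is removable if deleting it leaves a Young diagram, and addable if it is not in the diagram and adding it gives a Young diagram). It acts on $\mathbb{Z}^l$ by $\sigma_i*\mathbf{d}=\mathbf{d}'$, where $d'_j=d_j$ for $j\ne i$, $d'_i=d_{i+1}+d_{i-1}-d_i$ if $i\neq0$, and $d'_0=d_1+d_{l-1}-d_0+1$. *)

theory Defs
  imports Main
begin

text \<open>Partitions are identified with their Young diagrams (English convention):
  finite sets of cells (i,j) with i,j >= 1, closed downwards in both coordinates.\<close>

type_synonym cell = "nat \<times> nat"

definition is_young :: "cell set \<Rightarrow> bool" where
  "is_young D \<longleftrightarrow> finite D \<and> (\<forall>(i,j)\<in>D. 1 \<le> i \<and> 1 \<le> j) \<and>
     (\<forall>(i,j)\<in>D. \<forall>i' j'. 1 \<le> i' \<and> i' \<le> i \<and> 1 \<le> j' \<and> j' \<le> j \<longrightarrow> (i',j') \<in> D)"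

definition content :: "cell \<Rightarrow> int" where
  "content c = int (snd c) - int (fst c)"

definition has_res :: "nat \<Rightarrow> nat \<Rightarrow> cell \<Rightarrow> bool" where
  "has_res l k c \<longleftrightarrow> content c mod int l = int k mod int l"

definition removable :: "cell set \<Rightarrow> cell \<Rightarrow> bool" where
  "removable D c \<longleftrightarrow> c \<in> D \<and> is_young (D - {c})"

definition addable :: "cell set \<Rightarrow> cell \<Rightarrow> bool" where
  "addable D c \<longleftrightarrow> c \<notin> D \<and> is_young (insert c D)"

definition T_op :: "nat \<Rightarrow> nat \<Rightarrow> cell set \<Rightarrow> cell set" where
  "T_op l i D = (D - {c. removable D c \<and> has_res l i c}) \<union> {c. addable D c \<and> has_res l i c}"

definition N_cnt :: "nat \<Rightarrow> nat \<Rightarrow> cell set \<Rightarrow> int" where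
  "N_cnt l k D = int (card {c\<in>D. has_res l k c})"

definition dvec :: "nat \<Rightarrow> cell set \<Rightarrow> int list" where
  "dvec l D = map (\<lambda>k. N_cnt l k D) [0..<l]"

definition sigma_vec :: "nat \<Rightarrow> nat \<Rightarrow> int list \<Rightarrow> int list" where
  "sigma_vec l i d = d[i := d ! ((i + 1) mod l) + d ! ((i + l - 1) mod l) - d ! i
                          + (if i = 0 then 1 else 0)]"

definition adjacent :: "cell \<Rightarrow> cell \<Rightarrow> bool" where
  "adjacent a b \<longleftrightarrow> (fst a = fst b \<and> (snd b = snd a + 1 \<or> snd a = snd b + 1)) \<or>
                     (snd a = snd b \<and> (fst b = fst a + 1 \<or> fst a = fst b + 1))"

definition edge_connected :: "cell set \<Rightarrow> bool" where
  "edge_connected S \<longleftrightarrow> (\<forall>a\<in>S. \<forall>b\<in>S. (\<lambda>x y. x \<in> S \<and> y \<in> S \<and> adjacent x y)\<^sup>*\<^sup>* a b)"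

definition is_rim_hook :: "cell set \<Rightarrow> cell set \<Rightarrow> bool" where
  "is_rim_hook D S \<longleftrightarrow> S \<noteq> {} \<and> S \<subseteq> D \<and> is_young (D - S) \<and> edge_connected S \<and>
     \<not> (\<exists>i j. (i,j) \<in> S \<and> (i+1,j) \<in> S \<and> (i,j+1) \<in> S \<and> (i+1,j+1) \<in> S)"

definition is_core :: "nat \<Rightarrow> cell set \<Rightarrow> bool" where
  "is_core l D \<longleftrightarrow> is_young D \<and> \<not> (\<exists>S. is_rim_hook D S \<and> card S = l)"

definition Z_heart :: "nat \<Rightarrow> int list set" where
  "Z_heart l = {dvec l \<nu> | \<nu>. is_core l \<nu>}"

end

theory Submission
  imports Defs
begin


definition cellk :: "int \<Rightarrow> nat \<Rightarrow> cell" where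
  "cellk k t = (t + nat (-k), t + nat k)"

definition Dg :: "(int \<Rightarrow> nat) \<Rightarrow> cell set" where
  "Dg f = {(a,b). 1 \<le> a \<and> 1 \<le> b \<and> min a b \<le> f (int b - int a)}"

definition ncnt :: "cell set \<Rightarrow> int \<Rightarrow> nat" where
  "ncnt D k = card {c\<in>D. content c = k}"

definition wv :: "(int \<Rightarrow> nat) \<Rightarrow> int \<Rightarrow> int" where
  "wv f k = int (f (k-1)) - int (f k) - (if k \<ge> 1 then 1 else 0)"

definition good :: "(int \<Rightarrow> nat) \<Rightarrow> bool" where
  "good f \<longleftrightarrow> (\<forall>k. wv f k = 0 \<or> wv f k = -1) \<and> finite {k. f k \<noteq> 0}"

lemma young_down:
  assumes "is_young D" "(a,b) \<in> D" "1 \<le> a'" "a' \<le> a" "1 \<le> b'" "b' \<le> b"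
  shows "(a',b') \<in> D"
  using assms unfolding is_young_def by blast

lemma young_pos:
  assumes "is_young D" "(a,b) \<in> D" shows "1 \<le> a" "1 \<le> b"
  using assms unfolding is_young_def by auto

lemma young_fin: "is_young D \<Longrightarrow> finite D" unfolding is_young_def by auto

lemma cellk_content: "content (cellk k t) = k"
  unfolding cellk_def content_def by auto

lemma cellk_min: "cellk (int b - int a) (min a b) = (a,b)"
  unfolding cellk_def by auto

lemma cellk_inj: "inj (cellk k)"
  unfolding cellk_def inj_def by auto

lemma down_interval:
  fixes T :: "nat set"
  assumes "finite T" "\<And>t. t \<in> T \<Longrightarrow> 1 \<le> t" "\<And>t t'. t \<in> T \<Longrightarrow> 1 \<le> t' \<Longrightarrow> t' \<le> t \<Longrightarrow> t' \<in> T"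
  shows "T = {1..card T}"
proof (cases "T = {}")
  case True then show ?thesis by simp
next
  case False
  have "T = {1..Max T}"
  proof
    show "T \<subseteq> {1..Max T}"
    proof
      fix t assume "t \<in> T"
      then show "t \<in> {1..Max T}" using assms(1,2) by simp
    qed
    show "{1..Max T} \<subseteq> T"
    proof
      fix t assume t: "t \<in> {1..Max T}"
      have "Max T \<in> T" using assms(1) False by simp
      then show "t \<in> T" using assms(3)[of "Max T" t] t by simp
    qed
  qed
  then have "card T = Max T" by (metis card_atLeastAtMost diff_Suc_1)
  with \<open>T = {1..Max T}\<close> show ?thesis by simp
qed

lemma young_eq_Dg:
  assumes Y: "is_young D" shows "D = Dg (ncnt D)"
proof -
  have key: "\<And>k. {c\<in>D. content c = k} = cellk k ` {1..ncnt D k}"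
  proof -
    fix k
    define T where "T = {t. 1 \<le> t \<and> cellk k t \<in> D}"
    have e: "{c\<in>D. content c = k} = cellk k ` T"
    proof
      show "{c\<in>D. content c = k} \<subseteq> cellk k ` T"
      proof
        fix c assume c: "c \<in> {c\<in>D. content c = k}"
        obtain a b where ab: "c = (a,b)" by force
        have "1 \<le> a" "1 \<le> b" using young_pos[OF Y] c ab by auto
        moreover have "k = int b - int a" using c ab by (auto simp: content_def)
        ultimately have "cellk k (min a b) = c" "1 \<le> min a b" using ab cellk_min[of b a] by auto
        then show "c \<in> cellk k ` T" using c unfolding T_def by (metis (mono_tags, lifting) image_eqI mem_Collect_eq)
      qed
      show "cellk k ` T \<subseteq> {c\<in>D. content c = k}" unfolding T_def using cellk_content by auto
    qed
    have fT: "finite T"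
    proof -
      have "T \<subseteq> cellk k -` D" unfolding T_def by auto
      moreover have "finite (cellk k -` D)" using young_fin[OF Y] cellk_inj
        by (simp add: finite_vimageI)
      ultimately show ?thesis using finite_subset by blast
    qed
    have "T = {1..card T}"
    proof (rule down_interval[OF fT])
      show "\<And>t. t \<in> T \<Longrightarrow> 1 \<le> t" unfolding T_def by auto
      fix t t' assume "t \<in> T" "1 \<le> t'" "t' \<le> t"
      then show "t' \<in> T" unfolding T_def cellk_def
        using young_down[OF Y, of "t + nat (-k)" "t + nat k" "t' + nat (-k)" "t' + nat k"] by auto
    qed
    moreover have "ncnt D k = card T" unfolding ncnt_def e
      using card_image[of "cellk k" T] cellk_inj by (simp add: inj_on_def inj_def)
    ultimately show "{c\<in>D. content c = k} = cellk k ` {1..ncnt D k}" using e by simp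
  qed
  show ?thesis
  proof (rule set_eqI)
    fix c :: cell
    obtain a b where ab: "c = (a,b)" by force
    show "c \<in> D \<longleftrightarrow> c \<in> Dg (ncnt D)"
    proof
      assume "c \<in> D"
      then have "c \<in> {c\<in>D. content c = int b - int a}" using ab by (auto simp: content_def)
      then obtain t where "t \<in> {1..ncnt D (int b - int a)}" "c = cellk (int b - int a) t"
        using key by blast
      then show "c \<in> Dg (ncnt D)" using ab unfolding Dg_def cellk_def by auto
    next
      assume "c \<in> Dg (ncnt D)"
      then have "1 \<le> a" "1 \<le> b" "min a b \<in> {1..ncnt D (int b - int a)}" using ab unfolding Dg_def by auto
      then have "cellk (int b - int a) (min a b) \<in> {c\<in>D. content c = int b - int a}" using key by blast
      then show "c \<in> D" using ab cellk_min by simp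
    qed
  qed
qed

lemma ncnt_Dg: "ncnt (Dg f) k = f k"
proof -
  have "{c\<in>Dg f. content c = k} = cellk k ` {1..f k}"
  proof
    show "{c\<in>Dg f. content c = k} \<subseteq> cellk k ` {1..f k}"
    proof
      fix c assume c: "c \<in> {c\<in>Dg f. content c = k}"
      obtain a b where ab: "c = (a,b)" by force
      have "1 \<le> a" "1 \<le> b" "min a b \<le> f (int b - int a)" "k = int b - int a"
        using c ab unfolding Dg_def content_def by auto
      then have "cellk k (min a b) = c" "min a b \<in> {1..f k}" using ab cellk_min[of b a] by auto
      then show "c \<in> cellk k ` {1..f k}" by (metis image_eqI)
    qed
    show "cellk k ` {1..f k} \<subseteq> {c\<in>Dg f. content c = k}"
      using cellk_content unfolding Dg_def cellk_def by auto
  qed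
  then show ?thesis unfolding ncnt_def
    using card_image[of "cellk k" "{1..f k}"] cellk_inj by (simp add: inj_on_def inj_def)
qed

lemma mem_D: "is_young D \<Longrightarrow> (a,b) \<in> D \<longleftrightarrow> 1 \<le> a \<and> 1 \<le> b \<and> min a b \<le> ncnt D (int b - int a)"
  by (subst young_eq_Dg, assumption) (simp add: Dg_def)

lemma young_wv_pos:
  assumes Y: "is_young D" and k: "k \<ge> 1"
  shows "ncnt D k \<le> ncnt D (k-1) \<and> ncnt D (k-1) \<le> ncnt D k + 1"
proof
  show "ncnt D k \<le> ncnt D (k-1)"
  proof (cases "ncnt D k = 0")
    case False
    let ?t = "ncnt D k"
    have "(?t, ?t + nat k) \<in> D" using mem_D[OF Y, of ?t "?t + nat k"] False k by simp
    then have "(?t, ?t + nat k - 1) \<in> D" using young_down[OF Y, of ?t "?t + nat k" ?t "?t + nat k - 1"] False k by simp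
    then show ?thesis using mem_D[OF Y, of ?t "?t + nat k - 1"] k by simp
  qed simp
  show "ncnt D (k-1) \<le> ncnt D k + 1"
  proof (cases "ncnt D (k-1) \<le> 1")
    case False
    let ?t = "ncnt D (k-1)"
    have "(?t, ?t + nat (k-1)) \<in> D" using mem_D[OF Y, of ?t "?t + nat (k-1)"] False k by simp
    then have "(?t - 1, ?t + nat (k-1)) \<in> D" using young_down[OF Y, of ?t "?t + nat (k-1)" "?t - 1" "?t + nat (k-1)"] False k by simp
    then show ?thesis using mem_D[OF Y, of "?t - 1" "?t + nat (k-1)"] k False by (simp; linarith)
  qed simp
qed

lemma young_wv_neg:
  assumes Y: "is_young D" and k: "k \<le> 0"
  shows "ncnt D (k-1) \<le> ncnt D k \<and> ncnt D k \<le> ncnt D (k-1) + 1"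
proof
  show "ncnt D (k-1) \<le> ncnt D k"
  proof (cases "ncnt D (k-1) = 0")
    case False
    let ?t = "ncnt D (k-1)"
    have "(?t + nat (1-k), ?t) \<in> D" using mem_D[OF Y, of "?t + nat (1-k)" ?t] False k by simp
    then have "(?t + nat (1-k) - 1, ?t) \<in> D" using young_down[OF Y, of "?t + nat (1-k)" ?t "?t + nat (1-k) - 1" ?t] False k by simp
    then show ?thesis using mem_D[OF Y, of "?t + nat (1-k) - 1" ?t] k by simp
  qed simp
  show "ncnt D k \<le> ncnt D (k-1) + 1"
  proof (cases "ncnt D k \<le> 1")
    case False
    let ?t = "ncnt D k"
    have "(?t + nat (-k), ?t) \<in> D" using mem_D[OF Y, of "?t + nat (-k)" ?t] False k by simp
    then have "(?t + nat (-k), ?t - 1) \<in> D" using young_down[OF Y, of "?t + nat (-k)" ?t "?t + nat (-k)" "?t - 1"] False k by simp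
    then show ?thesis using mem_D[OF Y, of "?t + nat (-k)" "?t - 1"] k False by (simp; linarith)
  qed simp
qed

lemma young_good: assumes Y: "is_young D" shows "good (ncnt D)"
  unfolding good_def
proof
  show "\<forall>k. wv (ncnt D) k = 0 \<or> wv (ncnt D) k = -1"
  proof
    fix k :: int
    show "wv (ncnt D) k = 0 \<or> wv (ncnt D) k = -1"
    proof (cases "k \<ge> 1")
      case True then show ?thesis using young_wv_pos[OF Y True] unfolding wv_def by auto
    next
      case False then show ?thesis using young_wv_neg[OF Y, of k] unfolding wv_def by auto
    qed
  qed
  have "{k. ncnt D k \<noteq> 0} \<subseteq> content ` D"
  proof
    fix k assume "k \<in> {k. ncnt D k \<noteq> 0}"
    then have "{c\<in>D. content c = k} \<noteq> {}" unfolding ncnt_def by fastforce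
    then show "k \<in> content ` D" by blast
  qed
  then show "finite {k. ncnt D k \<noteq> 0}" using young_fin[OF Y] finite_subset by blast
qed

lemma down_closure:
  fixes D :: "cell set"
  assumes "(i,j) \<in> D"
    and L: "\<And>a b. (a,b) \<in> D \<Longrightarrow> 2 \<le> a \<Longrightarrow> (a-1,b) \<in> D"
    and R: "\<And>a b. (a,b) \<in> D \<Longrightarrow> 2 \<le> b \<Longrightarrow> (a,b-1) \<in> D"
    and "1 \<le> i'" "i' \<le> i" "1 \<le> j'" "j' \<le> j"
  shows "(i',j') \<in> D"
proof -
  have "(i',j) \<in> D"
  proof (rule inc_induct[of i' i "\<lambda>x. (x,j) \<in> D"])
    show "i' \<le> i" by fact
    show "(i,j) \<in> D" by fact
    fix n assume "i' \<le> n" "n < i" "(Suc n, j) \<in> D"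
    then show "(n,j) \<in> D" using L[of "Suc n" j] \<open>1 \<le> i'\<close> by simp
  qed
  show ?thesis
  proof (rule inc_induct[of j' j "\<lambda>x. (i',x) \<in> D"])
    show "j' \<le> j" by fact
    show "(i',j) \<in> D" by fact
    fix n assume "j' \<le> n" "n < j" "(i', Suc n) \<in> D"
    then show "(i',n) \<in> D" using R[of i' "Suc n"] \<open>1 \<le> j'\<close> by simp
  qed
qed

lemma good_young: assumes G: "good f" shows "is_young (Dg f)"
proof -
  have W: "\<And>k. wv f k = 0 \<or> wv f k = -1" using G unfolding good_def by auto
  have fin: "finite (Dg f)"
  proof -
    have "Dg f \<subseteq> (\<Union>k\<in>{k. f k \<noteq> 0}. cellk k ` {1..f k})"
    proof
      fix c assume c: "c \<in> Dg f"
      obtain a b where ab: "c = (a,b)" by force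
      have "1 \<le> min a b" "min a b \<le> f (int b - int a)" using c ab unfolding Dg_def by auto
      then show "c \<in> (\<Union>k\<in>{k. f k \<noteq> 0}. cellk k ` {1..f k})"
        using ab cellk_min[of b a] by (metis (mono_tags, lifting) UN_iff atLeastAtMost_iff image_eqI
            mem_Collect_eq not_one_le_zero le_trans)
    qed
    moreover have "finite (\<Union>k\<in>{k. f k \<noteq> 0}. cellk k ` {1..f k})"
      using G unfolding good_def by auto
    ultimately show ?thesis using finite_subset by blast
  qed
  have L: "\<And>a b. (a,b) \<in> Dg f \<Longrightarrow> 2 \<le> a \<Longrightarrow> (a-1,b) \<in> Dg f"
  proof -
    fix a b :: nat assume ab: "(a,b) \<in> Dg f" "2 \<le> a"
    have e: "int b - int (a-1) = (int b - int a) + 1" "int b - (int a - 1) = (int b - int a) + 1" using ab by auto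
    have "wv f (int b - int a + 1) = 0 \<or> wv f (int b - int a + 1) = -1" using W by blast
    then show "(a-1,b) \<in> Dg f" using ab unfolding Dg_def wv_def by (auto simp: e split: if_splits)
  qed
  have R: "\<And>a b. (a,b) \<in> Dg f \<Longrightarrow> 2 \<le> b \<Longrightarrow> (a,b-1) \<in> Dg f"
  proof -
    fix a b :: nat assume ab: "(a,b) \<in> Dg f" "2 \<le> b"
    have e: "int (b-1) - int a = (int b - int a) - 1" "int b - 1 - int a = (int b - int a) - 1" using ab by auto
    have "wv f (int b - int a) = 0 \<or> wv f (int b - int a) = -1" using W by blast
    then show "(a,b-1) \<in> Dg f" using ab unfolding Dg_def wv_def by (auto simp: e split: if_splits)
  qed
  show ?thesis unfolding is_young_def
  proof (intro conjI fin)
    show "\<forall>(i, j)\<in>Dg f. 1 \<le> i \<and> 1 \<le> j" unfolding Dg_def by auto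
    show "\<forall>(i, j)\<in>Dg f. \<forall>i' j'. 1 \<le> i' \<and> i' \<le> i \<and> 1 \<le> j' \<and> j' \<le> j \<longrightarrow> (i', j') \<in> Dg f"
      using down_closure[of _ _ "Dg f", OF _ L R] by blast
  qed
qed

lemma core:
  fixes a b x y z :: nat and k :: int
  assumes "1 \<le> a" "1 \<le> b" "k = int b - int a"
   and wx: "int x - int y - (if k \<ge> 1 then 1 else 0) = 0 \<or> int x - int y - (if k \<ge> 1 then 1 else 0) = -1"
   and wy: "int y - int z - (if k + 1 \<ge> 1 then 1 else 0) = 0 \<or> int y - int z - (if k+1 \<ge> 1 then 1 else 0) = -1"
  shows "((min a b \<le> y \<and> \<not>(\<not> min (a+1) b \<le> x \<and> \<not> min a (b+1) \<le> z)) \<or>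
          (\<not> min a b \<le> y \<and> (2 \<le> a \<longrightarrow> min (a-1) b \<le> z) \<and> (2 \<le> b \<longrightarrow> min a (b-1) \<le> x)))
     \<longleftrightarrow> int (min a b) \<le> int y + (int x - int y - (if k \<ge> 1 then 1 else 0)) - (int y - int z - (if k + 1 \<ge> 1 then 1 else 0))"
  using assms by (auto simp: min_def split: if_splits)

lemma removable_iff:
  assumes Y: "is_young D"
  shows "removable D (a,b) \<longleftrightarrow> (a,b) \<in> D \<and> (a+1,b) \<notin> D \<and> (a,b+1) \<notin> D"
proof
  assume r: "removable D (a,b)"
  then have c: "(a,b) \<in> D" and Y': "is_young (D - {(a,b)})" unfolding removable_def by auto
  have "1 \<le> a" "1 \<le> b" using young_pos[OF Y c] by auto
  show "(a,b) \<in> D \<and> (a+1,b) \<notin> D \<and> (a,b+1) \<notin> D"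
  proof (intro conjI c notI)
    assume "(a+1,b) \<in> D"
    then have "(a+1,b) \<in> D - {(a,b)}" by auto
    then have "(a,b) \<in> D - {(a,b)}" using young_down[OF Y', of "a+1" b a b] \<open>1 \<le> a\<close> \<open>1 \<le> b\<close> by auto
    then show False by auto
  next
    assume "(a,b+1) \<in> D"
    then have "(a,b+1) \<in> D - {(a,b)}" by auto
    then have "(a,b) \<in> D - {(a,b)}" using young_down[OF Y', of a "b+1" a b] \<open>1 \<le> a\<close> \<open>1 \<le> b\<close> by auto
    then show False by auto
  qed
next
  assume h: "(a,b) \<in> D \<and> (a+1,b) \<notin> D \<and> (a,b+1) \<notin> D"
  have "is_young (D - {(a,b)})" unfolding is_young_def
  proof (intro conjI)
    show "finite (D - {(a,b)})" using young_fin[OF Y] by auto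
    show "\<forall>(i, j)\<in>D - {(a, b)}. 1 \<le> i \<and> 1 \<le> j" using young_pos[OF Y] by auto
    have "\<And>i j i' j'. (i,j) \<in> D - {(a,b)} \<Longrightarrow> 1 \<le> i' \<Longrightarrow> i' \<le> i \<Longrightarrow> 1 \<le> j' \<Longrightarrow> j' \<le> j \<Longrightarrow> (i', j') \<in> D - {(a, b)}"
    proof -
      fix i j i' j' assume p: "(i,j) \<in> D - {(a,b)}" and le: "1 \<le> i'" "i' \<le> i" "1 \<le> j'" "j' \<le> j"
      have inD: "(i',j') \<in> D" using young_down[OF Y, of i j i' j'] p le by auto
      show "(i',j') \<in> D - {(a,b)}"
      proof (rule ccontr)
        assume "(i',j') \<notin> D - {(a,b)}"
        then have e: "i' = a" "j' = b" using inD by auto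
        have "(i,j) \<noteq> (a,b)" using p by auto
        then have "a + 1 \<le> i \<or> b + 1 \<le> j" using le e by auto
        then show False
        proof
          assume "a+1 \<le> i" then have "(a+1,b) \<in> D" using young_down[OF Y, of i j "a+1" b] p le e by auto
          then show False using h by auto
        next
          assume "b+1 \<le> j" then have "(a,b+1) \<in> D" using young_down[OF Y, of i j a "b+1"] p le e by auto
          then show False using h by auto
        qed
      qed
    qed
    then show "\<forall>(i, j)\<in>D - {(a, b)}. \<forall>i' j'. 1 \<le> i' \<and> i' \<le> i \<and> 1 \<le> j' \<and> j' \<le> j \<longrightarrow> (i', j') \<in> D - {(a, b)}"
      by blast
  qed
  then show "removable D (a,b)" using h unfolding removable_def by auto
qed

lemma addable_iff:
  assumes Y: "is_young D"
  shows "addable D (a,b) \<longleftrightarrow> (a,b) \<notin> D \<and> 1 \<le> a \<and> 1 \<le> b \<and> (2 \<le> a \<longrightarrow> (a-1,b) \<in> D) \<and> (2 \<le> b \<longrightarrow> (a,b-1) \<in> D)"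
proof
  assume r: "addable D (a,b)"
  then have c: "(a,b) \<notin> D" and Y': "is_young (insert (a,b) D)" unfolding addable_def by auto
  have p: "1 \<le> a" "1 \<le> b" using young_pos[OF Y', of a b] by auto
  have "2 \<le> a \<longrightarrow> (a-1,b) \<in> D"
  proof
    assume "2 \<le> a"
    then have "(a-1,b) \<in> insert (a,b) D" using young_down[OF Y', of a b "a-1" b] p by auto
    moreover have "a - 1 \<noteq> a" using \<open>2 \<le> a\<close> by auto
    ultimately show "(a-1,b) \<in> D" by auto
  qed
  moreover have "2 \<le> b \<longrightarrow> (a,b-1) \<in> D"
  proof
    assume "2 \<le> b"
    then have "(a,b-1) \<in> insert (a,b) D" using young_down[OF Y', of a b a "b-1"] p by auto
    moreover have "b - 1 \<noteq> b" using \<open>2 \<le> b\<close> by auto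
    ultimately show "(a,b-1) \<in> D" by auto
  qed
  ultimately show "(a,b) \<notin> D \<and> 1 \<le> a \<and> 1 \<le> b \<and> (2 \<le> a \<longrightarrow> (a-1,b) \<in> D) \<and> (2 \<le> b \<longrightarrow> (a,b-1) \<in> D)"
    using c p by auto
next
  assume h: "(a,b) \<notin> D \<and> 1 \<le> a \<and> 1 \<le> b \<and> (2 \<le> a \<longrightarrow> (a-1,b) \<in> D) \<and> (2 \<le> b \<longrightarrow> (a,b-1) \<in> D)"
  have "is_young (insert (a,b) D)" unfolding is_young_def
  proof (intro conjI)
    show "finite (insert (a,b) D)" using young_fin[OF Y] by auto
    show "\<forall>(i, j)\<in>insert (a,b) D. 1 \<le> i \<and> 1 \<le> j" using young_pos[OF Y] h by auto
    have "\<And>i j i' j'. (i,j) \<in> insert (a,b) D \<Longrightarrow> 1 \<le> i' \<Longrightarrow> i' \<le> i \<Longrightarrow> 1 \<le> j' \<Longrightarrow> j' \<le> j \<Longrightarrow> (i', j') \<in> insert (a,b) D"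
    proof -
      fix i j i' j' assume p: "(i,j) \<in> insert (a,b) D" and le: "1 \<le> i'" "i' \<le> i" "1 \<le> j'" "j' \<le> j"
      show "(i',j') \<in> insert (a,b) D"
      proof (cases "(i,j) \<in> D")
        case True then show ?thesis using young_down[OF Y, of i j i' j'] le by auto
      next
        case False
        then have e: "i = a" "j = b" using p by auto
        show ?thesis
        proof (cases "i' = a \<and> j' = b")
          case True then show ?thesis by simp
        next
          case False
          then have "i' \<le> a - 1 \<or> j' \<le> b - 1" using le e by auto
          then show ?thesis
          proof
            assume "i' \<le> a - 1" then show ?thesis using young_down[OF Y, of "a-1" b i' j'] h le e by auto
          next
            assume "j' \<le> b - 1" then show ?thesis using young_down[OF Y, of a "b-1" i' j'] h le e by auto
          qed
        qed
      qed
    qed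
    then show "\<forall>(i, j)\<in>insert (a,b) D. \<forall>i' j'. 1 \<le> i' \<and> i' \<le> i \<and> 1 \<le> j' \<and> j' \<le> j \<longrightarrow> (i', j') \<in> insert (a,b) D"
      by blast
  qed
  then show "addable D (a,b)" using h unfolding addable_def by auto
qed

definition fr :: "nat \<Rightarrow> nat \<Rightarrow> (int \<Rightarrow> nat) \<Rightarrow> int \<Rightarrow> nat" where
  "fr l i f k = (if k mod int l = int i then nat (int (f k) + wv f k - wv f (k+1)) else f k)"

lemma T_op_Dg:
  assumes Y: "is_young D" and il: "i < l"
  shows "T_op l i D = Dg (fr l i (ncnt D))"
proof (rule set_eqI)
  fix c :: cell
  obtain a b where ab: "c = (a,b)" by force
  let ?f = "ncnt D"
  define k where "k = int b - int a"
  have ii: "int i mod int l = int i" using il by simp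
  have resk: "has_res l i (a,b) \<longleftrightarrow> k mod int l = int i"
    unfolding has_res_def content_def k_def using ii by simp
  show "c \<in> T_op l i D \<longleftrightarrow> c \<in> Dg (fr l i ?f)"
  proof (cases "has_res l i (a,b)")
    case False
    then have "c \<in> T_op l i D \<longleftrightarrow> c \<in> D" unfolding T_op_def ab by auto
    moreover have "fr l i ?f k = ?f k" using False resk unfolding fr_def by auto
    ultimately show ?thesis using mem_D[OF Y, of a b] ab unfolding Dg_def k_def by auto
  next
    case True
    have G: "good ?f" using young_good[OF Y] .
    have W: "\<And>m. wv ?f m = 0 \<or> wv ?f m = -1" using G unfolding good_def by auto
    have mem: "c \<in> T_op l i D \<longleftrightarrow> ((a,b) \<in> D \<and> \<not> removable D (a,b)) \<or> addable D (a,b)"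
      unfolding T_op_def ab using True by auto
    have fk: "fr l i ?f k = nat (int (?f k) + wv ?f k - wv ?f (k+1))"
      using True resk unfolding fr_def by auto
    have e1: "int b - int (a+1) = k - 1" "int (b+1) - int a = k + 1" unfolding k_def by auto
    show ?thesis
    proof (cases "1 \<le> a \<and> 1 \<le> b")
      case False
      then have "(a,b) \<notin> D" using young_pos[OF Y, of a b] by auto
      then have "c \<notin> T_op l i D" using mem addable_iff[OF Y, of a b] False by auto
      then show ?thesis using False ab unfolding Dg_def by auto
    next
      case pos: True
      have e2: "2 \<le> a \<Longrightarrow> int b - int (a-1) = k + 1" "2 \<le> b \<Longrightarrow> int (b-1) - int a = k - 1"
        unfolding k_def by auto
      have m1: "(a,b) \<in> D \<longleftrightarrow> min a b \<le> ?f k" using mem_D[OF Y, of a b] pos k_def by auto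
      have m2: "(a+1,b) \<in> D \<longleftrightarrow> min (a+1) b \<le> ?f (k-1)" using mem_D[OF Y, of "a+1" b, unfolded e1(1)] pos by auto
      have m3: "(a,b+1) \<in> D \<longleftrightarrow> min a (b+1) \<le> ?f (k+1)" using mem_D[OF Y, of a "b+1", unfolded e1(2)] pos by auto
      have m4: "2 \<le> a \<Longrightarrow> (a-1,b) \<in> D \<longleftrightarrow> min (a-1) b \<le> ?f (k+1)"
      proof -
        assume h2: "2 \<le> a"
        show ?thesis using mem_D[OF Y, of "a-1" b, unfolded e2(1)[OF h2]] pos h2 by auto
      qed
      have m5: "2 \<le> b \<Longrightarrow> (a,b-1) \<in> D \<longleftrightarrow> min a (b-1) \<le> ?f (k-1)"
      proof -
        assume h2: "2 \<le> b"
        show ?thesis using mem_D[OF Y, of a "b-1", unfolded e2(2)[OF h2]] pos h2 by auto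
      qed
      have lhs: "c \<in> T_op l i D \<longleftrightarrow> ((min a b \<le> ?f k \<and> \<not>(\<not> min (a+1) b \<le> ?f (k-1) \<and> \<not> min a (b+1) \<le> ?f (k+1))) \<or>
          (\<not> min a b \<le> ?f k \<and> (2 \<le> a \<longrightarrow> min (a-1) b \<le> ?f (k+1)) \<and> (2 \<le> b \<longrightarrow> min a (b-1) \<le> ?f (k-1))))"
        unfolding mem removable_iff[OF Y] addable_iff[OF Y] using pos m1 m2 m3 m4 m5 by auto
      have wk: "wv ?f k = int (?f (k-1)) - int (?f k) - (if k \<ge> 1 then 1 else 0)" unfolding wv_def by simp
      have wk1: "wv ?f (k+1) = int (?f k) - int (?f (k+1)) - (if k + 1 \<ge> 1 then 1 else 0)" unfolding wv_def by simp
      have C: "((min a b \<le> ?f k \<and> \<not>(\<not> min (a+1) b \<le> ?f (k-1) \<and> \<not> min a (b+1) \<le> ?f (k+1))) \<or>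
          (\<not> min a b \<le> ?f k \<and> (2 \<le> a \<longrightarrow> min (a-1) b \<le> ?f (k+1)) \<and> (2 \<le> b \<longrightarrow> min a (b-1) \<le> ?f (k-1))))
          \<longleftrightarrow> int (min a b) \<le> int (?f k) + wv ?f k - wv ?f (k+1)"
        unfolding wk wk1 by (rule core[OF _ _ k_def]) (use pos W[of k] W[of "k+1"] wk wk1 in auto)
      have "c \<in> Dg (fr l i ?f) \<longleftrightarrow> int (min a b) \<le> int (?f k) + wv ?f k - wv ?f (k+1)"
        unfolding ab Dg_def using pos fk k_def by auto
      then show ?thesis using lhs C by auto
    qed
  qed
qed



definition pim :: "nat \<Rightarrow> nat \<Rightarrow> int \<Rightarrow> int" where
  "pim l i m = (if m mod int l = int i then m + 1 else if m mod int l = (int i + 1) mod int l then m - 1 else m)"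

lemma mod_prev: "(m - 1) mod (L::int) = I \<longleftrightarrow> m mod L = (I + 1) mod L" if "0 \<le> I" "I < L"
proof
  assume h: "(m - 1) mod L = I"
  have "m mod L = ((m - 1) + 1) mod L" by simp
  also have "\<dots> = ((m - 1) mod L + 1) mod L" by (simp add: mod_add_left_eq)
  finally show "m mod L = (I + 1) mod L" using h by simp
next
  assume h: "m mod L = (I + 1) mod L"
  have "(m - 1) mod L = (m mod L - 1) mod L" by (simp add: mod_diff_left_eq)
  also have "\<dots> = ((I + 1) mod L - 1) mod L" using h by simp
  also have "\<dots> = I mod L" by (simp add: mod_diff_left_eq)
  finally show "(m - 1) mod L = I" using that by simp
qed

lemma mod_cur_prev: "m mod (L::int) = I \<Longrightarrow> 0 \<le> I \<Longrightarrow> I < L \<Longrightarrow> 2 \<le> L \<Longrightarrow> (m - 1) mod L \<noteq> I"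
proof
  assume h: "m mod L = I" "0 \<le> I" "I < L" "2 \<le> L" and h2: "(m - 1) mod L = I"
  then have "m mod L = (I + 1) mod L" using mod_prev by blast
  then have e: "I = (I + 1) mod L" using h by simp
  show False
  proof (cases "I + 1 < L")
    case True then have "(I + 1) mod L = I + 1" using h by (simp add: mod_pos_pos_trivial)
    then show False using e by simp
  next
    case False then have "I + 1 = L" using h by simp
    then have "(I + 1) mod L = 0" by simp
    then show False using e h \<open>I + 1 = L\<close> by simp
  qed
qed

lemma good_W: "good f \<Longrightarrow> wv f k = 0 \<or> wv f k = -1" unfolding good_def by auto

lemma fr_nonneg: assumes "good f" shows "0 \<le> int (f k) + wv f k - wv f (k+1)"
  using good_W[OF assms, of k] good_W[OF assms, of "k+1"] unfolding wv_def by (auto split: if_splits)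

lemma fr_int: assumes "good f"
  shows "int (fr l i f k) = (if k mod int l = int i then int (f k) + wv f k - wv f (k+1) else int (f k))"
  unfolding fr_def using fr_nonneg[OF assms, of k] by auto

lemma wv_fr:
  assumes G: "good f" and l: "2 \<le> l" and il: "i < l"
  shows "wv (fr l i f) m = wv f (pim l i m)"
proof -
  have I0: "0 \<le> int i" "int i < int l" "2 \<le> int l" using il l by auto
  have P: "(m - 1) mod int l = int i \<longleftrightarrow> m mod int l = (int i + 1) mod int l" using mod_prev I0 by blast
  have F: "\<And>k. int (fr l i f k) = (if k mod int l = int i then int (f k) + wv f k - wv f (k+1) else int (f k))"
    using fr_int[OF G] .
  have wvd: "\<And>g m. wv g m = int (g (m-1)) - int (g m) - (if m \<ge> 1 then 1 else 0)" unfolding wv_def by simp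
  show ?thesis
  proof (cases "m mod int l = int i")
    case True
    then have "(m - 1) mod int l \<noteq> int i" using mod_cur_prev I0 by blast
    then show ?thesis using True unfolding wvd[of "fr l i f"] F pim_def by (simp add: wvd)
  next
    case False
    show ?thesis
    proof (cases "m mod int l = (int i + 1) mod int l")
      case True
      then have "(m - 1) mod int l = int i" using P by blast
      then show ?thesis using True False unfolding wvd[of "fr l i f"] F pim_def by (simp add: wvd)
    next
      case False2: False
      then have "(m - 1) mod int l \<noteq> int i" using P by blast
      then show ?thesis using False2 False unfolding wvd[of "fr l i f"] F pim_def by (simp add: wvd)
    qed
  qed
qed

lemma good_fr:
  assumes G: "good f" and l: "2 \<le> l" and il: "i < l"
  shows "good (fr l i f)"
  unfolding good_def
proof
  show "\<forall>k. wv (fr l i f) k = 0 \<or> wv (fr l i f) k = - 1" using wv_fr[OF assms] good_W[OF G] by auto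
  let ?S = "{k. f k \<noteq> 0}"
  have "{k. fr l i f k \<noteq> 0} \<subseteq> {0} \<union> ?S \<union> (\<lambda>x. x + 1) ` ?S \<union> (\<lambda>x. x - 1) ` ?S"
  proof
    fix k assume k: "k \<in> {k. fr l i f k \<noteq> 0}"
    show "k \<in> {0} \<union> ?S \<union> (\<lambda>x. x + 1) ` ?S \<union> (\<lambda>x. x - 1) ` ?S"
    proof (rule ccontr)
      assume n: "\<not> ?thesis"
      have z1: "k \<noteq> 0" "f k = 0" using n by auto
      have z2: "f (k-1) = 0"
      proof (rule ccontr)
        assume "f (k-1) \<noteq> 0" then have "k - 1 \<in> ?S" by simp
        then have "(k - 1) + 1 \<in> (\<lambda>x. x + 1) ` ?S" by blast
        then show False using n by simp
      qed
      have z3: "f (k+1) = 0"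
      proof (rule ccontr)
        assume "f (k+1) \<noteq> 0" then have "k + 1 \<in> ?S" by simp
        then have "(k + 1) - 1 \<in> (\<lambda>x. x - 1) ` ?S" by blast
        then show False using n by simp
      qed
      have "int (fr l i f k) = 0" using fr_int[OF G, of l i k] z1 z2 z3 unfolding wv_def by auto
      then show False using k by auto
    qed
  qed
  moreover have "finite ({0} \<union> ?S \<union> (\<lambda>x. x + 1) ` ?S \<union> (\<lambda>x. x - 1) ` ?S)" using G unfolding good_def by auto
  ultimately show "finite {k. fr l i f k \<noteq> 0}" using finite_subset by blast
qed




lemma mono_up: assumes G: "good f" and "0 \<le> k" shows "f (k + int n) \<le> f k"
proof (induction n)
  case 0 then show ?case by simp
next
  case (Suc n)
  have "wv f (k + int n + 1) = 0 \<or> wv f (k + int n + 1) = -1" using good_W[OF G] .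
  then have "f (k + int n + 1) \<le> f (k + int n)" using assms unfolding wv_def by (auto split: if_splits)
  then show ?case using Suc by (simp add: algebra_simps)
qed

lemma mono_down: assumes G: "good f" and "k \<le> 0" shows "f (k - int n) \<le> f k"
proof (induction n)
  case 0 then show ?case by simp
next
  case (Suc n)
  have "wv f (k - int n) = 0 \<or> wv f (k - int n) = -1" using good_W[OF G] .
  then have "f (k - int n - 1) \<le> f (k - int n)" using assms unfolding wv_def by (auto split: if_splits)
  then show ?case using Suc by (simp add: algebra_simps)
qed

lemma mono_up': "good f \<Longrightarrow> 0 \<le> k \<Longrightarrow> k \<le> k' \<Longrightarrow> f k' \<le> f k"
  using mono_up[of f k "nat (k' - k)"] by simp

lemma mono_down': "good f \<Longrightarrow> k \<le> 0 \<Longrightarrow> k' \<le> k \<Longrightarrow> f k' \<le> f k"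
  using mono_down[of f k "nat (k - k')"] by simp

lemma adj_cells:
  assumes G: "good f" and "1 \<le> f k" "1 \<le> f (k+1)"
  shows "adjacent (cellk k (f k)) (cellk (k+1) (f (k+1)))"
proof -
  have "wv f (k+1) = 0 \<or> wv f (k+1) = -1" using good_W[OF G] .
  then show ?thesis using assms unfolding wv_def adjacent_def cellk_def
    by (cases "0 \<le> k") (auto split: if_splits)
qed

lemma w_to_hook:
  assumes Y: "is_young D" and l: "1 \<le> l"
    and w1: "wv (ncnt D) (c+1) = 0" and w2: "wv (ncnt D) (c + 1 - int l) = -1"
  shows "\<exists>S. is_rim_hook D S \<and> card S = l"
proof -
  define f where "f = ncnt D"
  have G: "good f" unfolding f_def using young_good[OF Y] .
  define J where "J = {c + 1 - int l..c}"
  have fpos: "\<And>k. k \<in> J \<Longrightarrow> 1 \<le> f k"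
  proof (rule ccontr)
    fix k assume kJ: "k \<in> J" and n: "\<not> 1 \<le> f k"
    then have z: "f k = 0" by simp
    show False
    proof (cases "0 \<le> k")
      case True
      have "f c \<le> f k" "f (c+1) \<le> f k" using mono_up'[OF G True] kJ unfolding J_def by auto
      then have "f c = 0" "f (c+1) = 0" using z by auto
      then show False using w1 True kJ unfolding f_def[symmetric] wv_def J_def by auto
    next
      case False
      then have k0: "k \<le> 0" by simp
      have "f (c - int l) \<le> f k" "f (c + 1 - int l) \<le> f k" using mono_down'[OF G k0] kJ unfolding J_def by auto
      then have "f (c - int l) = 0" "f (c + 1 - int l) = 0" using z by auto
      moreover have "c + 1 - int l - 1 = c - int l" by simp
      ultimately show False using w2 False kJ unfolding f_def[symmetric] wv_def J_def by auto
    qed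
  qed
  define g where "g k = f k - (if k \<in> J then 1 else 0)" for k
  have gi: "int (g k) = int (f k) - (if k \<in> J then 1 else 0)" for k
    unfolding g_def using fpos[of k] by auto
  have Gg: "good g" unfolding good_def
  proof
    show "\<forall>k. wv g k = 0 \<or> wv g k = - 1"
    proof
      fix k
      have "wv g k = wv f k - (if k - 1 \<in> J then 1 else 0) + (if k \<in> J then 1 else 0)"
        unfolding wv_def gi by simp
      moreover have "k = c + 1 \<or> k = c + 1 - int l \<or> ((k - 1 \<in> J) = (k \<in> J))"
        unfolding J_def by auto
      ultimately show "wv g k = 0 \<or> wv g k = - 1"
        using good_W[OF G, of k] w1 w2 l unfolding f_def[symmetric] J_def by auto
    qed
    have "{k. g k \<noteq> 0} \<subseteq> {k. f k \<noteq> 0}" unfolding g_def by auto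
    then show "finite {k. g k \<noteq> 0}" using G unfolding good_def using finite_subset by blast
  qed
  define E where "E = Dg g"
  have YE: "is_young E" unfolding E_def using good_young[OF Gg] .
  have Df: "D = Dg f" unfolding f_def using young_eq_Dg[OF Y] .
  have ED: "E \<subseteq> D" unfolding E_def Df Dg_def g_def by auto
  define S where "S = D - E"
  have Seq: "S = (\<lambda>k. cellk k (f k)) ` J"
  proof
    show "S \<subseteq> (\<lambda>k. cellk k (f k)) ` J"
    proof
      fix x assume x: "x \<in> S"
      obtain a b where ab: "x = (a,b)" by force
      have h: "1 \<le> a" "1 \<le> b" "min a b \<le> f (int b - int a)" "\<not> min a b \<le> g (int b - int a)"
        using x ab unfolding S_def Df E_def Dg_def by auto
      then have kJ: "int b - int a \<in> J" and m: "min a b = f (int b - int a)" unfolding g_def by (auto split: if_splits)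
      have "x = cellk (int b - int a) (f (int b - int a))" using m cellk_min[of b a] ab by simp
      then show "x \<in> (\<lambda>k. cellk k (f k)) ` J" using kJ by blast
    qed
    show "(\<lambda>k. cellk k (f k)) ` J \<subseteq> S"
    proof
      fix x assume "x \<in> (\<lambda>k. cellk k (f k)) ` J"
      then obtain k where kJ: "k \<in> J" and x: "x = cellk k (f k)" by blast
      have "1 \<le> f k" using fpos[OF kJ] .
      then show "x \<in> S" unfolding x S_def Df E_def Dg_def cellk_def g_def using kJ by auto
    qed
  qed
  have injJ: "inj_on (\<lambda>k. cellk k (f k)) J"
    by (rule inj_onI) (metis cellk_content)
  have "card S = card J" unfolding Seq using card_image[OF injJ] .
  then have cardS: "card S = l" unfolding J_def by simp
  have contS: "\<And>x. x \<in> S \<Longrightarrow> \<exists>k\<in>J. x = cellk k (f k)" unfolding Seq by blast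
  have injS: "\<And>x y. x \<in> S \<Longrightarrow> y \<in> S \<Longrightarrow> content x = content y \<Longrightarrow> x = y"
    using contS cellk_content by metis
  define R where "R = (\<lambda>x y. x \<in> S \<and> y \<in> S \<and> adjacent x y)"
  have adjsym: "\<And>x y. adjacent x y \<Longrightarrow> adjacent y x" unfolding adjacent_def by auto
  have path: "\<And>n::nat. k \<in> J \<Longrightarrow> k + int n \<in> J \<Longrightarrow>
      R\<^sup>*\<^sup>* (cellk k (f k)) (cellk (k + int n) (f (k + int n))) \<and> R\<^sup>*\<^sup>* (cellk (k + int n) (f (k + int n))) (cellk k (f k))" for k
  proof -
    fix n :: nat
    show "k \<in> J \<Longrightarrow> k + int n \<in> J \<Longrightarrow>
      R\<^sup>*\<^sup>* (cellk k (f k)) (cellk (k + int n) (f (k + int n))) \<and> R\<^sup>*\<^sup>* (cellk (k + int n) (f (k + int n))) (cellk k (f k))"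
    proof (induction n)
      case 0 then show ?case by simp
    next
      case (Suc n)
      have J1: "k + int n \<in> J" using Suc.prems unfolding J_def by auto
      have J2: "k + int n + 1 \<in> J" using Suc.prems by (simp add: algebra_simps)
      have ad: "adjacent (cellk (k + int n) (f (k + int n))) (cellk (k + int n + 1) (f (k + int n + 1)))"
        using adj_cells[OF G fpos[OF J1] fpos[OF J2]] .
      have inS: "cellk (k + int n) (f (k + int n)) \<in> S" "cellk (k + int n + 1) (f (k + int n + 1)) \<in> S"
        unfolding Seq using J1 J2 by auto
      have r1: "R (cellk (k + int n) (f (k + int n))) (cellk (k + int n + 1) (f (k + int n + 1)))"
        unfolding R_def using ad inS by auto
      have r2: "R (cellk (k + int n + 1) (f (k + int n + 1))) (cellk (k + int n) (f (k + int n)))"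
        unfolding R_def using adjsym[OF ad] inS by auto
      have IH: "R\<^sup>*\<^sup>* (cellk k (f k)) (cellk (k + int n) (f (k + int n))) \<and> R\<^sup>*\<^sup>* (cellk (k + int n) (f (k + int n))) (cellk k (f k))"
        using Suc.IH Suc.prems(1) J1 by blast
      have e: "k + int (Suc n) = k + int n + 1" by simp
      show ?case unfolding e using IH r1 r2
        by (meson converse_rtranclp_into_rtranclp rtranclp.rtrancl_into_rtrancl)
    qed
  qed
  have conn: "edge_connected S" unfolding edge_connected_def
  proof (intro ballI)
    fix x y assume x: "x \<in> S" and y: "y \<in> S"
    obtain k where k: "k \<in> J" "x = cellk k (f k)" using contS[OF x] by blast
    obtain k' where k': "k' \<in> J" "y = cellk k' (f k')" using contS[OF y] by blast
    have "R\<^sup>*\<^sup>* x y"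
    proof (cases "k \<le> k'")
      case True
      then have "k' = k + int (nat (k' - k))" by simp
      then show ?thesis using path[of k "nat (k' - k)"] k k' by metis
    next
      case False
      then have "k = k' + int (nat (k - k'))" by simp
      then show ?thesis using path[of k' "nat (k - k')"] k k' by metis
    qed
    then show "(\<lambda>x y. x \<in> S \<and> y \<in> S \<and> adjacent x y)\<^sup>*\<^sup>* x y" unfolding R_def .
  qed
  have no22: "\<not> (\<exists>i j. (i,j) \<in> S \<and> (i+1,j) \<in> S \<and> (i,j+1) \<in> S \<and> (i+1,j+1) \<in> S)"
  proof
    assume "\<exists>i j. (i,j) \<in> S \<and> (i+1,j) \<in> S \<and> (i,j+1) \<in> S \<and> (i+1,j+1) \<in> S"
    then obtain i j where "(i,j) \<in> S" "(i+1,j+1) \<in> S" by blast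
    moreover have "content (i,j) = content (i+1,j+1)" unfolding content_def by simp
    ultimately show False using injS by fastforce
  qed
  have "is_rim_hook D S" unfolding is_rim_hook_def
  proof (intro conjI conn no22)
    show "S \<noteq> {}" using cardS l by auto
    show "S \<subseteq> D" unfolding S_def by auto
    have "D - S = E" unfolding S_def using ED by auto
    then show "is_young (D - S)" using YE by simp
  qed
  then show ?thesis using cardS by blast
qed



lemma adjacent_content: "adjacent x y \<Longrightarrow> content y = content x + 1 \<or> content y = content x - 1"
  unfolding adjacent_def content_def by auto

lemma hook_to_w:
  assumes Y: "is_young D" and H: "is_rim_hook D S" and cS: "card S = l" and l: "1 \<le> l"
  shows "\<exists>c. wv (ncnt D) (c+1) = 0 \<and> wv (ncnt D) (c + 1 - int l) = -1"
proof -
  define E where "E = D - S"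
  have YE: "is_young E" and SD: "S \<subseteq> D" and Sne: "S \<noteq> {}" and conn: "edge_connected S"
    and no22: "\<not> (\<exists>i j. (i,j) \<in> S \<and> (i+1,j) \<in> S \<and> (i,j+1) \<in> S \<and> (i+1,j+1) \<in> S)"
    using H unfolding is_rim_hook_def E_def by auto
  have finS: "finite S" using SD young_fin[OF Y] finite_subset by blast
  have lt: "False" if x: "(a,b) \<in> S" and y: "(a',b') \<in> S" and ct: "content (a,b) = content (a',b')" and aa: "a < a'" for a b a' b'
  proof -
    have bb: "b < b'" using ct aa unfolding content_def by auto
    have pa: "1 \<le> a" "1 \<le> b" using young_pos[OF Y, of a b] x SD by auto
    have inD: "(a+1,b) \<in> D" "(a,b+1) \<in> D" "(a+1,b+1) \<in> D"
      using young_down[OF Y, of a' b'] y SD aa bb pa by auto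
    have notE: "(a,b) \<notin> E" using x unfolding E_def by auto
    have "(a+1,b) \<notin> E" "(a,b+1) \<notin> E" "(a+1,b+1) \<notin> E"
      using young_down[OF YE, of "a+1" b a b] young_down[OF YE, of a "b+1" a b] young_down[OF YE, of "a+1" "b+1" a b] notE pa
      by auto
    then have "(a+1,b) \<in> S" "(a,b+1) \<in> S" "(a+1,b+1) \<in> S" using inD unfolding E_def by auto
    then show False using no22 x by blast
  qed
  have injS: "inj_on content S"
  proof (rule inj_onI)
    fix x y assume x: "x \<in> S" and y: "y \<in> S" and ct: "content x = content y"
    obtain a b where ab: "x = (a,b)" by force
    obtain a' b' where ab': "y = (a',b')" by force
    show "x = y"
    proof (cases "a < a'")
      case True then show ?thesis using lt[of a b a' b'] x y ct ab ab' by auto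
    next
      case False
      show ?thesis
      proof (cases "a' < a")
        case True then show ?thesis using lt[of a' b' a b] x y ct ab ab' by auto
      next
        case False
        then have "a = a'" using \<open>\<not> a < a'\<close> by auto
        then show ?thesis using ct ab ab' unfolding content_def by auto
      qed
    qed
  qed
  define C where "C = content ` S"
  have finC: "finite C" "C \<noteq> {}" unfolding C_def using finS Sne by auto
  have interv: "\<And>x y k. x \<in> S \<Longrightarrow> (\<lambda>x y. x \<in> S \<and> y \<in> S \<and> adjacent x y)\<^sup>*\<^sup>* x y \<Longrightarrow>
      (content x \<le> k \<and> k \<le> content y) \<or> (content y \<le> k \<and> k \<le> content x) \<Longrightarrow> k \<in> C"
  proof -
    fix x y k
    assume x: "x \<in> S" and r: "(\<lambda>x y. x \<in> S \<and> y \<in> S \<and> adjacent x y)\<^sup>*\<^sup>* x y"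
    show "(content x \<le> k \<and> k \<le> content y) \<or> (content y \<le> k \<and> k \<le> content x) \<Longrightarrow> k \<in> C"
      using r
    proof (induction arbitrary: k rule: rtranclp_induct)
      case base then show ?case using x unfolding C_def by auto
    next
      case (step y z)
      have z: "z \<in> S" and ad: "adjacent y z" using step by auto
      show ?case
      proof (cases "k = content z")
        case True then show ?thesis using z unfolding C_def by auto
      next
        case False
        then have "(content x \<le> k \<and> k \<le> content y) \<or> (content y \<le> k \<and> k \<le> content x)"
          using step.prems adjacent_content[OF ad] by auto
        then show ?thesis using step.IH by blast
      qed
    qed
  qed
  define lo where "lo = Min C"
  define hi where "hi = Max C"
  have Cint: "C = {lo..hi}"
  proof
    show "C \<subseteq> {lo..hi}" unfolding lo_def hi_def using finC by auto
    show "{lo..hi} \<subseteq> C"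
    proof
      fix k assume k: "k \<in> {lo..hi}"
      have "lo \<in> C" "hi \<in> C" unfolding lo_def hi_def using finC by auto
      then obtain x y where "x \<in> S" "y \<in> S" "content x = lo" "content y = hi" unfolding C_def by auto
      moreover then have "(\<lambda>x y. x \<in> S \<and> y \<in> S \<and> adjacent x y)\<^sup>*\<^sup>* x y" using conn unfolding edge_connected_def by blast
      ultimately show "k \<in> C" using interv k by auto
    qed
  qed
  have "card C = l" unfolding C_def using card_image[OF injS] cS by simp
  then have lohi: "lo = hi + 1 - int l" using Cint l by (simp; arith)
  have cntS: "card {x\<in>S. content x = k} = (if k \<in> C then 1 else 0)" for k
  proof (cases "k \<in> C")
    case True
    then obtain x where x: "x \<in> S" "content x = k" unfolding C_def by auto
    then have "{x\<in>S. content x = k} = {x}" using injS unfolding inj_on_def by auto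
    then show ?thesis using True by simp
  next
    case False
    then have e: "{x\<in>S. content x = k} = {}" unfolding C_def by auto
    show ?thesis unfolding e using False by simp
  qed
  have nE: "int (ncnt E k) = int (ncnt D k) - (if k \<in> C then 1 else 0)" for k
  proof -
    have "{x\<in>E. content x = k} = {x\<in>D. content x = k} - {x\<in>S. content x = k}" unfolding E_def by auto
    moreover have "{x\<in>S. content x = k} \<subseteq> {x\<in>D. content x = k}" using SD by auto
    moreover have "finite {x\<in>S. content x = k}" using finS by auto
    ultimately have "ncnt E k = ncnt D k - card {x\<in>S. content x = k}" unfolding ncnt_def
      by (simp add: card_Diff_subset)
    moreover have "card {x\<in>S. content x = k} \<le> ncnt D k" unfolding ncnt_def
      using \<open>{x\<in>S. content x = k} \<subseteq> {x\<in>D. content x = k}\<close> young_fin[OF Y] by (simp add: card_mono)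
    ultimately show ?thesis using cntS[of k] by auto
  qed
  have GE: "good (ncnt E)" using young_good[OF YE] .
  have GD: "good (ncnt D)" using young_good[OF Y] .
  have lh: "lo \<le> hi" using lohi l by simp
  have a1: "wv (ncnt E) (hi + 1) = wv (ncnt D) (hi + 1) - 1" unfolding wv_def nE Cint using lh by simp
  have a2: "wv (ncnt E) lo = wv (ncnt D) lo + 1" unfolding wv_def nE Cint using lohi l by simp
  have b1: "wv (ncnt E) (hi + 1) = 0 \<or> wv (ncnt E) (hi + 1) = -1" "wv (ncnt D) (hi + 1) = 0 \<or> wv (ncnt D) (hi + 1) = -1"
    "wv (ncnt E) lo = 0 \<or> wv (ncnt E) lo = -1" "wv (ncnt D) lo = 0 \<or> wv (ncnt D) lo = -1"
    using GE GD unfolding good_def by blast+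
  have "wv (ncnt D) (hi + 1) = 0" using a1 b1 by linarith
  moreover have "wv (ncnt D) lo = -1" using a2 b1 by linarith
  ultimately show ?thesis using lohi by blast
qed



lemma mod_shift: "(k - d) mod (L::int) = r \<longleftrightarrow> k mod L = (r + d) mod L" if "0 \<le> r" "r < L"
proof
  assume h: "(k - d) mod L = r"
  have "k mod L = ((k - d) + d) mod L" by simp
  also have "\<dots> = ((k - d) mod L + d) mod L" by (simp add: mod_add_left_eq)
  finally show "k mod L = (r + d) mod L" using h by simp
next
  assume h: "k mod L = (r + d) mod L"
  have "(k - d) mod L = (k mod L - d) mod L" by (simp add: mod_diff_left_eq)
  also have "\<dots> = ((r + d) mod L - d) mod L" using h by simp
  also have "\<dots> = r mod L" by (simp add: mod_diff_left_eq)
  finally show "(k - d) mod L = r" using that by simp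
qed

lemma sum_same_support:
  assumes "finite A" "finite B" "\<And>k. G k \<noteq> 0 \<Longrightarrow> k \<in> A \<and> k \<in> B"
  shows "sum G A = sum G B"
proof -
  have "sum G A = sum G (A \<union> B)" by (rule sum.mono_neutral_left) (use assms in auto)
  moreover have "sum G B = sum G (A \<union> B)" by (rule sum.mono_neutral_left) (use assms in auto)
  ultimately show ?thesis by simp
qed

lemma shift_sum:
  fixes h :: "int \<Rightarrow> int" and M L r d :: int
  assumes hz: "\<And>k. M \<le> \<bar>k\<bar> + 1 \<Longrightarrow> h k = 0" and d: "\<bar>d\<bar> \<le> 1" and r: "0 \<le> r" "r < L"
  shows "(\<Sum>k\<in>{k\<in>{-M..M}. k mod L = r}. h (k + d)) = (\<Sum>k\<in>{k\<in>{-M..M}. k mod L = (r + d) mod L}. h k)"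
proof -
  let ?K = "{-M..M}"
  have "(\<Sum>k\<in>{k\<in>?K. k mod L = r}. h (k + d)) = (\<Sum>k\<in>?K. if k mod L = r then h (k + d) else 0)"
    by (rule sum.inter_filter) simp
  also have "\<dots> = (\<Sum>k\<in>(\<lambda>k. k + d) ` ?K. if (k - d) mod L = r then h k else 0)"
  proof -
    have "(\<Sum>k\<in>(\<lambda>k. k + d) ` ?K. if (k - d) mod L = r then h k else 0) =
      (\<Sum>k\<in>?K. (\<lambda>k. if (k - d) mod L = r then h k else 0) (k + d))"
      by (rule sum.reindex_cong[of "\<lambda>k. k + d"]) (auto simp: inj_on_def)
    then show ?thesis by simp
  qed
  also have "\<dots> = (\<Sum>k\<in>?K. if (k - d) mod L = r then h k else 0)"
  proof (rule sum_same_support)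
    fix k assume "(if (k - d) mod L = r then h k else 0) \<noteq> 0"
    then have "h k \<noteq> 0" by (auto split: if_splits)
    then have "\<bar>k\<bar> + 1 < M" using hz by force
    then have "k \<in> ?K" "k - d \<in> ?K" using d by auto
    then show "k \<in> (\<lambda>k. k + d) ` ?K \<and> k \<in> ?K" by (auto simp: image_iff intro: bexI[of _ "k - d"])
  qed auto
  also have "\<dots> = (\<Sum>k\<in>?K. if k mod L = (r + d) mod L then h k else 0)"
    by (rule sum.cong) (use mod_shift[OF r] in auto)
  also have "\<dots> = (\<Sum>k\<in>{k\<in>?K. k mod L = (r + d) mod L}. h k)"
    by (rule sum.inter_filter[symmetric]) simp
  finally show ?thesis .
qed

lemma Ncnt_sum:
  assumes Y: "is_young D" and K: "finite K" and z: "\<And>k. k \<notin> K \<Longrightarrow> ncnt D k = 0"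
  shows "N_cnt l j D = (\<Sum>k\<in>{k\<in>K. k mod int l = int j mod int l}. int (ncnt D k))"
proof -
  define I where "I = {k\<in>K. k mod int l = int j mod int l}"
  define A where "A k = {c\<in>D. content c = k}" for k
  have fin: "finite D" using young_fin[OF Y] .
  have e: "{c\<in>D. has_res l j c} = (\<Union>k\<in>I. A k)"
  proof
    show "{c\<in>D. has_res l j c} \<subseteq> (\<Union>k\<in>I. A k)"
    proof
      fix c assume c: "c \<in> {c\<in>D. has_res l j c}"
      then have cD: "c \<in> D" and cr: "has_res l j c" by auto
      have cA: "c \<in> A (content c)" using cD unfolding A_def by blast
      have "ncnt D (content c) = card (A (content c))" unfolding ncnt_def A_def by (rule refl)
      moreover have "finite (A (content c))" using fin unfolding A_def by simp
      ultimately have "ncnt D (content c) \<noteq> 0" using cA by (metis card_0_eq empty_iff)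
      then have "content c \<in> K" using z[of "content c"] by auto
      moreover have "content c mod int l = int j mod int l" using cr unfolding has_res_def .
      ultimately have "content c \<in> I" unfolding I_def by blast
      then show "c \<in> (\<Union>k\<in>I. A k)" using cA by blast
    qed
    show "(\<Union>k\<in>I. A k) \<subseteq> {c\<in>D. has_res l j c}"
    proof
      fix c assume "c \<in> (\<Union>k\<in>I. A k)"
      then obtain k where "k \<in> I" "c \<in> A k" by blast
      then have "c \<in> D" "content c = k" "k mod int l = int j mod int l" unfolding A_def I_def by auto
      then show "c \<in> {c\<in>D. has_res l j c}" unfolding has_res_def by blast
    qed
  qed
  have fI: "finite I" unfolding I_def using K by simp
  have "card (\<Union>k\<in>I. A k) = (\<Sum>k\<in>I. card (A k))"
  proof (rule card_UN_disjoint[OF fI])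
    show "\<forall>i\<in>I. finite (A i)" unfolding A_def using fin by simp
    show "\<forall>i\<in>I. \<forall>j\<in>I. i \<noteq> j \<longrightarrow> A i \<inter> A j = {}" unfolding A_def by blast
  qed
  then have "int (card {c\<in>D. has_res l j c}) = (\<Sum>k\<in>I. int (card (A k)))" unfolding e by simp
  then show ?thesis unfolding N_cnt_def ncnt_def I_def[symmetric] A_def[symmetric] .
qed

lemma fr_expl:
  assumes G: "good f"
  shows "int (fr l i f k) = (if k mod int l = int i then int (f (k-1)) + int (f (k+1)) - int (f k) + (if k = 0 then 1 else 0) else int (f k))"
  unfolding fr_int[OF G] wv_def by auto

lemma dvec_T:
  assumes Y: "is_young D" and l: "2 \<le> l" and il: "i < l"
  shows "dvec l (T_op l i D) = sigma_vec l i (dvec l D)"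
proof -
  define f where "f = ncnt D"
  have G: "good f" unfolding f_def using young_good[OF Y] .
  define f' where "f' = fr l i f"
  have TD: "T_op l i D = Dg f'" unfolding f'_def f_def using T_op_Dg[OF Y il] .
  have YT: "is_young (T_op l i D)" unfolding TD f'_def using good_young[OF good_fr[OF G l il]] .
  have nT: "ncnt (T_op l i D) = f'" unfolding TD using ncnt_Dg by auto
  define M0 where "M0 = (\<Sum>k\<in>{k. f k \<noteq> 0}. \<bar>k\<bar>)"
  have fin: "finite {k. f k \<noteq> 0}" using G unfolding good_def by auto
  have bnd: "\<And>k. f k \<noteq> 0 \<Longrightarrow> \<bar>k\<bar> \<le> M0"
    unfolding M0_def by (rule member_le_sum) (use fin in auto)
  have M00: "0 \<le> M0" unfolding M0_def by (simp add: sum_nonneg)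
  define M where "M = M0 + 3"
  define K where "K = {-M..M}"
  have fz: "\<And>k. M \<le> \<bar>k\<bar> + 2 \<Longrightarrow> f k = 0" using bnd unfolding M_def by force
  have f'z: "\<And>k. M \<le> \<bar>k\<bar> + 1 \<Longrightarrow> f' k = 0"
  proof -
    fix k :: int assume k: "M \<le> \<bar>k\<bar> + 1"
    have "f (k-1) = 0" "f k = 0" "f (k+1) = 0" using fz k by auto
    moreover have "k \<noteq> 0" using k M00 unfolding M_def by auto
    ultimately have "int (f' k) = 0" unfolding f'_def fr_expl[OF G] by simp
    then show "f' k = 0" by simp
  qed
  have zD: "\<And>k. k \<notin> K \<Longrightarrow> ncnt D k = 0" unfolding K_def f_def[symmetric] using fz by auto
  have zT: "\<And>k. k \<notin> K \<Longrightarrow> ncnt (T_op l i D) k = 0" unfolding K_def nT using f'z by auto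
  have fK: "finite K" unfolding K_def by simp
  have ND: "\<And>j. N_cnt l j D = (\<Sum>k\<in>{k\<in>K. k mod int l = int j mod int l}. int (f k))"
    unfolding f_def using Ncnt_sum[OF Y fK zD] .
  have NT: "\<And>j. N_cnt l j (T_op l i D) = (\<Sum>k\<in>{k\<in>K. k mod int l = int j mod int l}. int (f' k))"
    using Ncnt_sum[OF YT fK zT] unfolding nT .
  have ii: "int i mod int l = int i" using il by simp
  have other: "N_cnt l j (T_op l i D) = N_cnt l j D" if j: "j < l" "j \<noteq> i" for j
  proof -
    have "int j mod int l = int j" using j by simp
    then show ?thesis unfolding NT ND
      by (intro sum.cong refl) (use j in \<open>auto simp: f'_def fr_expl[OF G]\<close>)
  qed
  have sh: "\<And>d r. \<bar>d\<bar> \<le> 1 \<Longrightarrow> 0 \<le> r \<Longrightarrow> r < int l \<Longrightarrow>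
     (\<Sum>k\<in>{k\<in>K. k mod int l = r}. int (f (k + d))) = (\<Sum>k\<in>{k\<in>K. k mod int l = (r + d) mod int l}. int (f k))"
    unfolding K_def by (rule shift_sum) (use fz in auto)
  have cur: "N_cnt l i (T_op l i D) = N_cnt l ((i+1) mod l) D + N_cnt l ((i + l - 1) mod l) D - N_cnt l i D + (if i = 0 then 1 else 0)"
  proof -
    let ?Ki = "{k\<in>K. k mod int l = int i}"
    have "N_cnt l i (T_op l i D) = (\<Sum>k\<in>?Ki. int (f (k + -1)) + int (f (k + 1)) - int (f k) + (if k = 0 then 1 else 0))"
      unfolding NT ii by (intro sum.cong refl) (auto simp: f'_def fr_expl[OF G])
    also have "\<dots> = (\<Sum>k\<in>?Ki. int (f (k + -1))) + (\<Sum>k\<in>?Ki. int (f (k + 1))) - (\<Sum>k\<in>?Ki. int (f k)) + (\<Sum>k\<in>?Ki. (if k = 0 then 1 else 0))"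
      by (simp add: sum.distrib sum_subtractf)
    also have "(\<Sum>k\<in>?Ki. int (f (k + -1))) = (\<Sum>k\<in>{k\<in>K. k mod int l = (int i + -1) mod int l}. int (f k))"
      using sh[of "-1" "int i"] il by simp
    also have "(\<Sum>k\<in>?Ki. int (f (k + 1))) = (\<Sum>k\<in>{k\<in>K. k mod int l = (int i + 1) mod int l}. int (f k))"
      using sh[of "1" "int i"] il by simp
    also have "(\<Sum>k\<in>?Ki. (if k = 0 then 1 else 0) :: int) = (if i = 0 then 1 else 0)"
    proof -
      have "0 \<in> K" unfolding K_def M_def using M00 by simp
      have "(\<Sum>k\<in>?Ki. (if k = 0 then 1 else 0) :: int) = (if 0 \<in> ?Ki then 1 else 0)"
        by (rule sum.delta) (use fK in auto)
      moreover have "0 \<in> ?Ki \<longleftrightarrow> i = 0" using \<open>0 \<in> K\<close> by auto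
      ultimately show ?thesis by simp
    qed
    also have "(\<Sum>k\<in>{k\<in>K. k mod int l = (int i + -1) mod int l}. int (f k)) = N_cnt l ((i + l - 1) mod l) D"
    proof -
      have "int ((i + l - 1) mod l) mod int l = (int i + -1) mod int l"
      proof -
        have "int ((i + l - 1) mod l) = (int i + int l - 1) mod int l" using l by (simp add: of_nat_mod of_nat_diff)
        moreover have "int i + int l - 1 = (int i - 1) + int l" by simp
        ultimately show ?thesis using mod_add_self2[of "int i - 1" "int l"] by simp
      qed
      then show ?thesis unfolding ND by simp
    qed
    also have "(\<Sum>k\<in>{k\<in>K. k mod int l = (int i + 1) mod int l}. int (f k)) = N_cnt l ((i + 1) mod l) D"
    proof -
      have "int ((i + 1) mod l) mod int l = (int i + 1) mod int l" by (simp add: of_nat_mod add.commute)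
      then show ?thesis unfolding ND by simp
    qed
    also have "(\<Sum>k\<in>?Ki. int (f k)) = N_cnt l i D" unfolding ND ii ..
    finally show ?thesis by simp
  qed
  show ?thesis
  proof (rule nth_equalityI)
    show "length (dvec l (T_op l i D)) = length (sigma_vec l i (dvec l D))"
      unfolding dvec_def sigma_vec_def by simp
    fix j assume "j < length (dvec l (T_op l i D))"
    then have j: "j < l" unfolding dvec_def by simp
    show "dvec l (T_op l i D) ! j = sigma_vec l i (dvec l D) ! j"
    proof (cases "j = i")
      case True
      have "(i + 1) mod l < l" "(i + l - 1) mod l < l" using l by auto
      then show ?thesis using True j il cur unfolding dvec_def sigma_vec_def by simp
    next
      case False
      then show ?thesis using j il other[OF j False] unfolding dvec_def sigma_vec_def by simp
    qed
  qed
qed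


lemma pim_shift: "pim l i (m - int l) = pim l i m - int l"
proof -
  have "(m - int l) mod int l = m mod int l" by (simp add: mod_diff_right_eq[symmetric])
  then show ?thesis unfolding pim_def by simp
qed

lemma core_T:
  assumes C: "is_core l \<nu>" and l: "2 \<le> l" and il: "i < l"
  shows "is_core l (T_op l i \<nu>)"
proof -
  have Y: "is_young \<nu>" using C unfolding is_core_def by auto
  define f where "f = ncnt \<nu>"
  have G: "good f" unfolding f_def using young_good[OF Y] .
  have TD: "T_op l i \<nu> = Dg (fr l i f)" unfolding f_def using T_op_Dg[OF Y il] .
  have YT: "is_young (T_op l i \<nu>)" unfolding TD using good_young[OF good_fr[OF G l il]] .
  have nT: "ncnt (T_op l i \<nu>) = fr l i f" unfolding TD using ncnt_Dg by auto
  have "\<not> (\<exists>S. is_rim_hook (T_op l i \<nu>) S \<and> card S = l)"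
  proof
    assume "\<exists>S. is_rim_hook (T_op l i \<nu>) S \<and> card S = l"
    then obtain S where S: "is_rim_hook (T_op l i \<nu>) S" "card S = l" by blast
    obtain c where c: "wv (fr l i f) (c+1) = 0" "wv (fr l i f) (c + 1 - int l) = -1"
      using hook_to_w[OF YT S] l unfolding nT by auto
    define m where "m = pim l i (c+1)"
    have "wv f m = 0" using c(1) wv_fr[OF G l il] unfolding m_def by simp
    moreover have "c + 1 - int l = (c + 1) - int l" by simp
    then have "wv f (m - int l) = -1" using c(2) wv_fr[OF G l il, of "c + 1 - int l"] pim_shift[of l i "c+1"]
      unfolding m_def by simp
    ultimately have "\<exists>S. is_rim_hook \<nu> S \<and> card S = l"
      using w_to_hook[OF Y _, of l "m - 1"] l unfolding f_def by simp
    then show False using C unfolding is_core_def by blast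
  qed
  then show ?thesis using YT unfolding is_core_def by blast
qed

theorem proposition4p11:
  fixes l :: nat
  assumes "l > 1"
  shows "(\<forall>D i. is_young D \<and> i < l \<longrightarrow> dvec l (T_op l i D) = sigma_vec l i (dvec l D))
       \<and> (\<forall>\<nu> i. is_core l \<nu> \<and> i < l \<longrightarrow>
            is_core l (T_op l i \<nu>) \<and> dvec l \<nu> \<in> Z_heart l \<and>
            dvec l (T_op l i \<nu>) = sigma_vec l i (dvec l \<nu>) \<and>
            sigma_vec l i (dvec l \<nu>) \<in> Z_heart l)"
proof (intro conjI allI impI)
  have l: "2 \<le> l" using assms by simp
  show "dvec l (T_op l i D) = sigma_vec l i (dvec l D)" if "is_young D \<and> i < l" for D i
    using dvec_T[of D l i] that l by simp
  fix \<nu> i assume h: "is_core l \<nu> \<and> i < l"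
  then have Y: "is_young \<nu>" unfolding is_core_def by auto
  show cT: "is_core l (T_op l i \<nu>)" using core_T[of l \<nu> i] h l by simp
  show "dvec l \<nu> \<in> Z_heart l" unfolding Z_heart_def using h by blast
  show eq: "dvec l (T_op l i \<nu>) = sigma_vec l i (dvec l \<nu>)" using dvec_T[OF Y l] h by simp
  show "sigma_vec l i (dvec l \<nu>) \<in> Z_heart l" unfolding Z_heart_def eq[symmetric] using cT by blast
qed

end
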